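(* Let $K$ be as in the context and let $F=a_1x_1^4+\cdots+a_{11}x_{11}^4$ with all $a_i\in K\setminus\{0\}$. If $F$ is of type $(5,0,3,0)$, then $F$ has a nontrivial zero in $K^{11}$.
   Context: $K$ is one of $\mathbb{Q}_2(\sqrt2),\mathbb{Q}_2(\sqrt{10}),\mathbb{Q}_2(\sqrt{-2}),\mathbb{Q}_2(\sqrt{-10})$, with uniformizer $\pi$ and valuation $v_\pi$. The level of the variable $x_i$ is $v_\pi(a_i)$, considered modulo $4$. For nonnegative integers $s_0,s_1,s_2,s_3$, the form is said to be of type $(s_0,s_1,s_2,s_3)$ if there exists $j\in\mathbb{Z}/4$ such that for each $i\in\{0,1,2,3\}$ the number of variables whose level is congruent to $i+j$ modulo $4$ is at least $s_i$ (so types differing by a cyclic permutation of the entries are the same type). *)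

theory Defs
  imports Main
begin

text \<open>A normalized discrete valuation on a field (values only meaningful on nonzero
elements): multiplicative, ultrametric, with an element of valuation 1 (a uniformizer).\<close>
definition normalized_discrete_valuation :: "('a::field \<Rightarrow> int) \<Rightarrow> bool" where
  "normalized_discrete_valuation v \<longleftrightarrow>
     (\<forall>x y. x \<noteq> 0 \<and> y \<noteq> 0 \<longrightarrow> v (x * y) = v x + v y) \<and>
     (\<forall>x y. x \<noteq> 0 \<and> y \<noteq> 0 \<and> x + y \<noteq> 0 \<longrightarrow> v (x + y) \<ge> min (v x) (v y)) \<and>
     (\<exists>p. p \<noteq> 0 \<and> v p = 1)"

definition val_cauchy :: "('a::field \<Rightarrow> int) \<Rightarrow> (nat \<Rightarrow> 'a) \<Rightarrow> bool" where
  "val_cauchy v s \<longleftrightarrow>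
     (\<forall>M. \<exists>N. \<forall>m\<ge>N. \<forall>n\<ge>N. s m \<noteq> s n \<longrightarrow> v (s m - s n) \<ge> M)"

definition val_converges_to :: "('a::field \<Rightarrow> int) \<Rightarrow> (nat \<Rightarrow> 'a) \<Rightarrow> 'a \<Rightarrow> bool" where
  "val_converges_to v s L \<longleftrightarrow>
     (\<forall>M. \<exists>N. \<forall>n\<ge>N. s n \<noteq> L \<longrightarrow> v (s n - L) \<ge> M)"

definition val_complete :: "('a::field \<Rightarrow> int) \<Rightarrow> bool" where
  "val_complete v \<longleftrightarrow> (\<forall>s. val_cauchy v s \<longrightarrow> (\<exists>L. val_converges_to v s L))"

text \<open>K together with its normalized valuation v is (isomorphic to) one of
  Q_2(sqrt 2), Q_2(sqrt 10), Q_2(sqrt(-2)), Q_2(sqrt(-10)):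
  a complete discretely valued field whose residue field is F_2
  (every unit is congruent to 1), with v(2) = 2 (ramification index 2 over Q_2),
  containing a square root of d for some d in {2,10,-2,-10}.
  These conditions force K to be a quadratic totally ramified extension of Q_2,
  hence K = Q_2(sqrt d).\<close>
definition is_Q2_sqrt_field :: "('a::field \<Rightarrow> int) \<Rightarrow> bool" where
  "is_Q2_sqrt_field v \<longleftrightarrow>
     normalized_discrete_valuation v \<and> val_complete v \<and>
     (\<forall>x. x \<noteq> 0 \<and> v x = 0 \<longrightarrow> x = 1 \<or> v (x - 1) > 0) \<and>
     (2::'a) \<noteq> 0 \<and> v 2 = 2 \<and>
     (\<exists>d::int. d \<in> {2, 10, -2, -10} \<and> (\<exists>s::'a. s ^ 2 = of_int d))"

definition level :: "('a::field \<Rightarrow> int) \<Rightarrow> 'a \<Rightarrow> int" where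
  "level v c = v c mod 4"

definition form_of_type ::
  "('a::field \<Rightarrow> int) \<Rightarrow> nat \<Rightarrow> (nat \<Rightarrow> 'a) \<Rightarrow> (nat \<Rightarrow> nat) \<Rightarrow> bool" where
  "form_of_type v n a s \<longleftrightarrow>
     (\<exists>j::int. \<forall>i<4. card {k. k < n \<and> level v (a k) = (int i + j) mod 4} \<ge> s i)"

end

theory Submission
  imports Defs
begin
lemma bex01: "(\<exists>x\<in>{0::int,1}. P x) = (P 0 \<or> P 1)" by auto
lemma z4:
  fixes c0 c1 c2 c3 c4 :: int
  shows "4 dvd c0+c1 \<or> 4 dvd c0+c2 \<or> 4 dvd c0+c3 \<or> 4 dvd c0+c4 \<or> 4 dvd c1+c2 \<or>
         4 dvd c1+c3 \<or> 4 dvd c1+c4 \<or> 4 dvd c2+c3 \<or> 4 dvd c2+c4 \<or> 4 dvd c3+c4 \<or>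
         4 dvd c0+c1+c2+c3 \<or> 4 dvd c0+c1+c2+c4 \<or> 4 dvd c0+c1+c3+c4 \<or> 4 dvd c0+c2+c3+c4 \<or> 4 dvd c1+c2+c3+c4"
  by presburger
lemma z4ex:
  fixes c0 c1 c2 c3 c4 :: int
  shows "\<exists>t0\<in>{0,1}. \<exists>t1\<in>{0,1}. \<exists>t2\<in>{0,1}. \<exists>t3\<in>{0,1}. \<exists>t4\<in>{0::int,1}.
     (t0+t1+t2+t3+t4 = 2 \<or> t0+t1+t2+t3+t4 = 4) \<and> 4 dvd (t0*c0+t1*c1+t2*c2+t3*c3+t4*c4)"
  using z4[of c0 c1 c2 c3 c4] unfolding bex01
  by (elim disjE; simp add: add.assoc)

lemma even_t: "t \<in> {0::int,1} \<Longrightarrow> odd A \<Longrightarrow> even (t*A - t)"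
  by auto
lemma fin0: "even SA \<Longrightarrow> C mod 4 = 2 \<Longrightarrow> D mod 4 = 0 \<Longrightarrow> 4 dvd (SB::int) \<Longrightarrow>
   \<exists>\<tau>\<in>{0::int,1}. 4 dvd SA + \<tau>*C \<and> 4 dvd SB + \<tau>*D"
  unfolding bex01 by presburger
lemma fin1: "even SA \<Longrightarrow> C mod 4 = 2 \<Longrightarrow> D mod 4 = 2 \<Longrightarrow> 4 dvd (SB - SA::int) \<Longrightarrow>
   \<exists>\<tau>\<in>{0::int,1}. 4 dvd SA + \<tau>*C \<and> 4 dvd SB + \<tau>*D"
  unfolding bex01 by presburger
lemma int_prefix:
  fixes A0 A1 A2 A3 A4 B0 B1 B2 B3 B4 C D :: int
  assumes o: "odd A0" "odd A1" "odd A2" "odd A3" "odd A4" and C: "C mod 4 = 2" and D: "even D"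
  shows "\<exists>t0\<in>{0,1}. \<exists>t1\<in>{0,1}. \<exists>t2\<in>{0,1}. \<exists>t3\<in>{0,1}. \<exists>t4\<in>{0::int,1}. \<exists>\<tau>\<in>{0::int,1}.
     (t0+t1+t2+t3+t4 = 2 \<or> t0+t1+t2+t3+t4 = 4)
     \<and> 4 dvd (t0*A0+t1*A1+t2*A2+t3*A3+t4*A4+\<tau>*C) \<and> 4 dvd (t0*B0+t1*B1+t2*B2+t3*B3+t4*B4+\<tau>*D)"
proof -
  have "D mod 4 = 0 \<or> D mod 4 = 2" using D by presburger
  then consider (a) "D mod 4 = 0" | (b) "D mod 4 = 2" by blast
  then show ?thesis
  proof cases
    case a
    from z4ex[of B0 B1 B2 B3 B4] obtain t0 t1 t2 t3 t4 where
      t: "t0 \<in> {0,1}" "t1 \<in> {0,1}" "t2 \<in> {0,1}" "t3 \<in> {0,1}" "t4 \<in> {0::int,1}"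
      and s: "t0+t1+t2+t3+t4 = 2 \<or> t0+t1+t2+t3+t4 = 4" and dv: "4 dvd (t0*B0+t1*B1+t2*B2+t3*B3+t4*B4)"
      by blast
    have e: "even (t0*A0+t1*A1+t2*A2+t3*A3+t4*A4)"
    proof -
      have "even ((t0*A0-t0)+(t1*A1-t1)+(t2*A2-t2)+(t3*A3-t3)+(t4*A4-t4))"
        using even_t[OF t(1) o(1)] even_t[OF t(2) o(2)] even_t[OF t(3) o(3)] even_t[OF t(4) o(4)] even_t[OF t(5) o(5)]
        by simp
      moreover have "even (t0+t1+t2+t3+t4)" using s by (elim disjE; simp)
      moreover have "(t0*A0+t1*A1+t2*A2+t3*A3+t4*A4) = ((t0*A0-t0)+(t1*A1-t1)+(t2*A2-t2)+(t3*A3-t3)+(t4*A4-t4)) + (t0+t1+t2+t3+t4)"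
        by simp
      ultimately show ?thesis by (metis even_add)
    qed
    from fin0[OF e C a dv] t s show ?thesis by blast
  next
    case b
    from z4ex[of "B0-A0" "B1-A1" "B2-A2" "B3-A3" "B4-A4"] obtain t0 t1 t2 t3 t4 where
      t: "t0 \<in> {0,1}" "t1 \<in> {0,1}" "t2 \<in> {0,1}" "t3 \<in> {0,1}" "t4 \<in> {0::int,1}"
      and s: "t0+t1+t2+t3+t4 = 2 \<or> t0+t1+t2+t3+t4 = 4" and dv: "4 dvd (t0*(B0-A0)+t1*(B1-A1)+t2*(B2-A2)+t3*(B3-A3)+t4*(B4-A4))"
      by blast
    have e: "even (t0*A0+t1*A1+t2*A2+t3*A3+t4*A4)"
    proof -
      have "even ((t0*A0-t0)+(t1*A1-t1)+(t2*A2-t2)+(t3*A3-t3)+(t4*A4-t4))"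
        using even_t[OF t(1) o(1)] even_t[OF t(2) o(2)] even_t[OF t(3) o(3)] even_t[OF t(4) o(4)] even_t[OF t(5) o(5)]
        by simp
      moreover have "even (t0+t1+t2+t3+t4)" using s by (elim disjE; simp)
      moreover have "(t0*A0+t1*A1+t2*A2+t3*A3+t4*A4) = ((t0*A0-t0)+(t1*A1-t1)+(t2*A2-t2)+(t3*A3-t3)+(t4*A4-t4)) + (t0+t1+t2+t3+t4)"
        by simp
      ultimately show ?thesis by (metis even_add)
    qed
    have dv': "4 dvd (t0*B0+t1*B1+t2*B2+t3*B3+t4*B4) - (t0*A0+t1*A1+t2*A2+t3*A3+t4*A4)"
      using dv by (simp add: algebra_simps)
    from fin1[OF e C b dv'] t s show ?thesis by blast
  qed
qed

locale qf =
  fixes v :: "'a::field \<Rightarrow> int" and s :: 'a and d :: int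
  assumes ndv: "normalized_discrete_valuation v"
  and comp: "val_complete v"
  and res: "\<forall>x. x \<noteq> 0 \<and> v x = 0 \<longrightarrow> x = 1 \<or> v (x - 1) > 0"
  and two: "(2::'a) \<noteq> 0" and v2: "v 2 = 2"
  and dd: "d \<in> {2,10,-2,-10}" and sd: "s^2 = of_int d"
begin

lemma vmult: "x \<noteq> 0 \<Longrightarrow> y \<noteq> 0 \<Longrightarrow> v (x*y) = v x + v y"
  using ndv unfolding normalized_discrete_valuation_def by blast
lemma vadd: "x \<noteq> 0 \<Longrightarrow> y \<noteq> 0 \<Longrightarrow> x + y \<noteq> 0 \<Longrightarrow> v (x+y) \<ge> min (v x) (v y)"
  using ndv unfolding normalized_discrete_valuation_def by blast
lemma v1: "v 1 = 0"
  using vmult[of 1 1] by simp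
lemma vm1: "v (-1) = 0"
  using vmult[of "-1" "-1"] v1 by simp
lemma vneg: "v (-x) = v x"
proof (cases "x = 0")
  case True then show ?thesis by simp
next
  case False
  then show ?thesis using vmult[of "-1" x] vm1 by simp
qed
lemma vinv: "x \<noteq> 0 \<Longrightarrow> v (inverse x) = - v x"
  using vmult[of x "inverse x"] v1 by simp
lemma vdiv: "x \<noteq> 0 \<Longrightarrow> y \<noteq> 0 \<Longrightarrow> v (x / y) = v x - v y"
  using vmult[of x "inverse y"] vinv[of y] by (simp add: divide_inverse)
lemma vpow: "x \<noteq> 0 \<Longrightarrow> v (x^n) = int n * v x"
  by (induction n) (auto simp: v1 vmult algebra_simps)

definition intg :: "'a \<Rightarrow> bool" where "intg x \<longleftrightarrow> x = 0 \<or> 0 \<le> v x"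

lemma intg_0[simp]: "intg 0" and intg_1[simp]: "intg 1"
  by (auto simp: intg_def v1)
lemma intg_add: "intg x \<Longrightarrow> intg y \<Longrightarrow> intg (x + y)"
proof -
  assume a: "intg x" "intg y"
  show "intg (x+y)"
  proof (cases "x = 0 \<or> y = 0 \<or> x + y = 0")
    case True then show ?thesis using a by auto
  next
    case False
    then have "v (x+y) \<ge> min (v x) (v y)" using vadd by blast
    moreover have "v x \<ge> 0" "v y \<ge> 0" using a False unfolding intg_def by auto
    ultimately have "v (x+y) \<ge> 0" by linarith
    then show ?thesis unfolding intg_def by simp
  qed
qed
lemma intg_neg: "intg x \<Longrightarrow> intg (-x)"
  unfolding intg_def by (simp add: vneg)
lemma intg_diff: "intg x \<Longrightarrow> intg y \<Longrightarrow> intg (x - y)"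
  using intg_add[of x "-y"] intg_neg[of y] by simp
lemma intg_mult: "intg x \<Longrightarrow> intg y \<Longrightarrow> intg (x * y)"
  unfolding intg_def by (cases "x=0"; cases "y=0"; simp add: vmult)
lemma intg_pow: "intg x \<Longrightarrow> intg (x ^ n)"
  by (induction n) (auto intro: intg_mult)
lemma intg_of_nat: "intg (of_nat n)"
  by (induction n) (auto intro: intg_add)
lemma intg_of_int: "intg (of_int n)"
proof (cases "n \<ge> 0")
  case True
  then show ?thesis using intg_of_nat[of "nat n"] by simp
next
  case False
  then show ?thesis using intg_neg[OF intg_of_nat[of "nat (-n)"]] by simp
qed
lemma intg_sum: "(\<And>i. i \<in> A \<Longrightarrow> intg (f i)) \<Longrightarrow> intg (sum f A)"
  by (induction A rule: infinite_finite_induct) (auto intro: intg_add)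

lemma four_ne: "(4::'a) \<noteq> 0"
proof -
  have "(2::'a) * 2 \<noteq> 0" using two no_zero_divisors by blast
  then show ?thesis by simp
qed
lemma v4: "v 4 = 4"
  using vmult[of 2 2] two v2 by simp
lemma five: "(5::'a) \<noteq> 0 \<and> v 5 = 0"
proof -
  have n5: "(5::'a) \<noteq> 0"
  proof
    assume z: "(5::'a) = 0"
    have "(1::'a) = 5 - 4" by simp
    also have "\<dots> = - 4" using z by simp
    finally have e: "(1::'a) = - 4" .
    have "v 1 = v (- 4)" using arg_cong[OF e, of v] .
    then show False using v1 v4 vneg[of 4] by simp
  qed
  have "v (1 + 4) \<ge> min (v 1) (v 4)" using vadd[of 1 4] n5 four_ne by simp
  then have "v 5 \<ge> 0" using v1 v4 by simp
  moreover have "v (5 + (-4)) \<ge> min (v 5) (v (-4))" using vadd[of 5 "-4"] n5 four_ne by simp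
  then have "v 5 \<le> 0" using v1 vneg[of 4] v4 by simp
  ultimately show ?thesis using n5 by simp
qed

definition hd :: int where "hd = d div 2"
lemma d_cases: "d = 2 \<or> d = 10 \<or> d = -2 \<or> d = -10" using dd by simp
lemma hd_cases: "hd \<in> {1,5,-1,-5}" and d_hd: "d = 2 * hd"
  using d_cases by (auto simp: hd_def)
lemma of_d: "(of_int d::'a) = 2 * of_int hd" proof -
  have "(of_int d::'a) = of_int (2 * hd)" using d_hd by simp
  then show ?thesis by simp
qed
lemma hd_unit: "(of_int hd::'a) \<noteq> 0 \<and> v (of_int hd) = 0"
  using hd_cases five v1 vneg[of 1] vneg[of 5] by auto
lemma hd_odd: "odd hd" using hd_cases by auto
lemma d_ne: "(of_int d::'a) \<noteq> 0" and vd: "v (of_int d) = 2"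
  using hd_unit two v2 vmult[of 2 "of_int hd"] unfolding of_d by auto
lemma s_ne: "s \<noteq> 0" using sd d_ne by auto
lemma vs: "v s = 1"
  using vpow[OF s_ne, of 2] sd vd by simp
lemma intg_s: "intg s" using vs unfolding intg_def by simp

definition dvs :: "nat \<Rightarrow> 'a \<Rightarrow> bool" where "dvs n x \<longleftrightarrow> (\<exists>y. intg y \<and> x = s^n * y)"

lemma dvs_0[simp]: "dvs n 0" unfolding dvs_def by (rule exI[of _ 0]) simp
lemma dvs0_iff: "dvs 0 x \<longleftrightarrow> intg x" unfolding dvs_def by simp
lemma dvs_add: "dvs n x \<Longrightarrow> dvs n y \<Longrightarrow> dvs n (x + y)"
  unfolding dvs_def by (metis distrib_left intg_add)
lemma dvs_neg: "dvs n x \<Longrightarrow> dvs n (- x)"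
  unfolding dvs_def by (metis mult_minus_right intg_neg)
lemma dvs_diff: "dvs n x \<Longrightarrow> dvs n y \<Longrightarrow> dvs n (x - y)"
  using dvs_add[of n x "-y"] dvs_neg[of n y] by simp
lemma dvs_mult_intg: "dvs n x \<Longrightarrow> intg y \<Longrightarrow> dvs n (x * y)"
  unfolding dvs_def by (metis mult.assoc intg_mult)
lemma dvs_mult_intg': "dvs n x \<Longrightarrow> intg y \<Longrightarrow> dvs n (y * x)"
  using dvs_mult_intg by (simp add: mult.commute)
lemma dvs_mult: "dvs m x \<Longrightarrow> dvs n y \<Longrightarrow> dvs (m + n) (x * y)"
proof -
  assume "dvs m x" "dvs n y"
  then obtain a b where "intg a" "intg b" "x = s^m * a" "y = s^n * b" unfolding dvs_def by blast
  then show ?thesis unfolding dvs_def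
    by (intro exI[of _ "a*b"]) (simp add: intg_mult power_add algebra_simps)
qed
lemma dvs_pow: "dvs n (s^n)" unfolding dvs_def by (intro exI[of _ 1]) simp
lemma dvs_mono: "m \<le> n \<Longrightarrow> dvs n x \<Longrightarrow> dvs m x"
proof -
  assume "m \<le> n" "dvs n x"
  then obtain a where "intg a" "x = s^n * a" unfolding dvs_def by blast
  moreover have "s^n = s^m * s^(n-m)" using \<open>m \<le> n\<close> by (simp flip: power_add)
  ultimately show ?thesis unfolding dvs_def
    by (intro exI[of _ "s^(n-m)*a"]) (simp add: intg_mult intg_pow intg_s mult.assoc)
qed
lemma dvs_intg: "dvs n x \<Longrightarrow> intg x"
  using dvs_mono[of 0 n x] dvs0_iff by simp
lemma dvs_iff_v: "x \<noteq> 0 \<Longrightarrow> dvs n x \<longleftrightarrow> v x \<ge> int n"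
proof
  assume x: "x \<noteq> 0" and "dvs n x"
  then obtain a where a: "intg a" "x = s^n * a" unfolding dvs_def by blast
  then have "a \<noteq> 0" using x by auto
  then have "v x = int n + v a" using a vmult[of "s^n" a] vpow[OF s_ne, of n] s_ne vs by simp
  then show "v x \<ge> int n" using a \<open>a \<noteq> 0\<close> unfolding intg_def by simp
next
  assume x: "x \<noteq> 0" and "v x \<ge> int n"
  have "v (x / s^n) = v x - int n" using vdiv[OF x, of "s^n"] vpow[OF s_ne, of n] vs s_ne by simp
  then have "intg (x / s^n)" unfolding intg_def using \<open>v x \<ge> int n\<close> by simp
  then show "dvs n x" unfolding dvs_def using s_ne by (intro exI[of _ "x / s^n"]) simp
qed
lemma not_dvs_1: "\<not> dvs 1 1"
  using dvs_iff_v[of 1 1] v1 by simp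
lemma residue: "intg y \<Longrightarrow> dvs 1 y \<or> dvs 1 (y - 1)"
proof -
  assume y: "intg y"
  show ?thesis
  proof (cases "y = 0 \<or> v y \<ge> 1")
    case True then show ?thesis using dvs_iff_v[of y 1] by (cases "y = 0") auto
  next
    case False
    then have "y \<noteq> 0" "v y = 0" using y unfolding intg_def by auto
    then have "y = 1 \<or> v (y - 1) > 0" using res by blast
    then show ?thesis using dvs_iff_v[of "y - 1" 1] by (cases "y = 1") auto
  qed
qed
lemma unit_res: "intg y \<Longrightarrow> \<not> dvs 1 y \<Longrightarrow> dvs 1 (y - 1)"
  using residue by blast
lemma dvs_two: "dvs 2 (2::'a)"
proof -
  have "(2::'a) = s^2 * inverse (of_int hd)"
    using sd of_d hd_unit by (simp add: field_simps)
  moreover have "intg (inverse (of_int hd::'a))" using hd_unit vinv unfolding intg_def by simp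
  ultimately show ?thesis unfolding dvs_def by blast
qed
lemma dvs_of_int4: "4 dvd n \<Longrightarrow> dvs 4 (of_int n::'a)"
proof -
  assume "4 dvd n"
  then obtain k where "n = 4 * k" by blast
  then have "(of_int n::'a) = (2 * 2) * of_int k" by simp
  moreover have "dvs 4 ((2::'a) * 2)" using dvs_mult[OF dvs_two dvs_two] by simp
  ultimately show ?thesis using dvs_mult_intg intg_of_int by metis
qed
lemma dvs_all_zero: "(\<And>n. dvs n x) \<Longrightarrow> x = 0"
proof (rule ccontr)
  assume a: "\<And>n. dvs n x" and x: "x \<noteq> 0"
  have "v x \<ge> int (nat (v x + 1))" using a[of "nat (v x + 1)"] dvs_iff_v[OF x] by blast
  then show False by linarith
qed
lemma dvs_1_not_unit: "intg y \<Longrightarrow> dvs 1 (y - 1) \<Longrightarrow> \<not> dvs 1 y"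
  using dvs_diff[of 1 y "y - 1"] not_dvs_1 by auto
lemma unit_ne: "dvs 1 (y - 1) \<Longrightarrow> y \<noteq> 0"
  using not_dvs_1 dvs_neg by fastforce

lemma dvs_half: "dvs (n+2) x \<Longrightarrow> dvs n (x / 2)"
proof -
  assume "dvs (n+2) x"
  then obtain y where y: "intg y" "x = s^(n+2) * y" unfolding dvs_def by blast
  have ss: "s * s = 2 * of_int hd" using sd of_d by (simp add: power2_eq_square)
  have "x / 2 = s^n * (of_int hd * y)"
    using y ss two by (simp add: power_add field_simps)
  then show ?thesis unfolding dvs_def using y intg_mult intg_of_int by blast
qed

lemma cauchy_from_dvs:
  assumes "\<And>N m. m \<ge> N \<Longrightarrow> dvs N (f m - f N)"
  shows "val_cauchy v f"
  unfolding val_cauchy_def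
proof
  fix M :: int
  show "\<exists>N. \<forall>m\<ge>N. \<forall>n\<ge>N. f m \<noteq> f n \<longrightarrow> M \<le> v (f m - f n)"
  proof (intro exI[of _ "nat M"] allI impI)
    fix m n assume mn: "m \<ge> nat M" "n \<ge> nat M" "f m \<noteq> f n"
    have "dvs (nat M) ((f m - f (nat M)) - (f n - f (nat M)))"
      using assms[OF mn(1)] assms[OF mn(2)] dvs_diff by blast
    then have "dvs (nat M) (f m - f n)" by simp
    then have "v (f m - f n) \<ge> int (nat M)" using dvs_iff_v mn(3) by simp
    then show "M \<le> v (f m - f n)" by linarith
  qed
qed

lemma conv_dvs:
  assumes "val_converges_to v f L"
  shows "\<exists>N. \<forall>n\<ge>N. dvs m (f n - L)"
proof -
  obtain N where N: "\<forall>n\<ge>N. f n \<noteq> L \<longrightarrow> v (f n - L) \<ge> int m"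
    using assms unfolding val_converges_to_def by blast
  show ?thesis
  proof (intro exI[of _ N] allI impI)
    fix n assume "n \<ge> N"
    then show "dvs m (f n - L)" using N dvs_iff_v[of "f n - L" m] by (cases "f n = L") auto
  qed
qed

primrec sq_seq :: "'a \<Rightarrow> nat \<Rightarrow> 'a" where
  "sq_seq z 0 = 0"
| "sq_seq z (Suc n) = (z - (sq_seq z n)^2) / 2"

lemma sqrt_lemma:
  assumes k: "k \<ge> 5" and z: "dvs k z"
  shows "\<exists>w. w^2 = 1 + z \<and> dvs (k-2) (w - 1)"
proof -
  let ?t = "sq_seq z"
  have tb: "dvs (k-2) (?t n)" for n
  proof (induction n)
    case 0 then show ?case by simp
  next
    case (Suc n)
    have "dvs ((k-2)+(k-2)) (?t n * ?t n)" using dvs_mult[OF Suc Suc] .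
    then have "dvs k (?t n ^ 2)" using dvs_mono[of k "(k-2)+(k-2)"] k by (simp add: power2_eq_square)
    then have "dvs k (z - ?t n ^ 2)" using dvs_diff[OF z] by simp
    moreover have "(k-2)+2 = k" using k by simp
    ultimately have "dvs ((k-2)+2) (z - ?t n ^ 2)" by simp
    then show ?case using dvs_half by simp
  qed
  have inc: "dvs (n + (k-2)) (?t (Suc n) - ?t n)" for n
  proof (induction n)
    case 0
    have "(k-2)+2 = k" using k by simp
    then have "dvs ((k-2)+2) z" using z by simp
    then show ?case using dvs_half[of "k-2" z] by simp
  next
    case (Suc n)
    have gen: "a' - a = (- ((a - b) * (a + b))) / 2" if "a' = (z - a^2)/2" "a = (z - b^2)/2" for a' a b :: 'a
    proof -
      have "a' - a = ((z - a^2) - (z - b^2)) / 2" using that by (simp add: diff_divide_distrib)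
      also have "\<dots> = (- ((a - b) * (a + b))) / 2" by (simp add: power2_eq_square algebra_simps)
      finally show ?thesis .
    qed
    have eq: "?t (Suc (Suc n)) - ?t (Suc n) = (- ((?t (Suc n) - ?t n) * (?t (Suc n) + ?t n))) / 2"
      by (rule gen) (rule sq_seq.simps(2))+
    have pr: "dvs ((n + (k-2)) + (k-2)) ((?t (Suc n) - ?t n) * (?t (Suc n) + ?t n))"
      using dvs_mult[OF Suc dvs_add[OF tb tb]] .
    have "dvs ((Suc n + (k-2)) + 2) (- ((?t (Suc n) - ?t n) * (?t (Suc n) + ?t n)))"
    proof -
      have le: "(Suc n + (k-2)) + 2 \<le> (n + (k-2)) + (k-2)" using k by simp
      show ?thesis using dvs_neg[OF dvs_mono[OF le pr]] .
    qed
    then show ?case unfolding eq using dvs_half by blast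
  qed
  have cs: "dvs N (?t m - ?t N)" if "m \<ge> N" for N m
    using that
  proof (induction m rule: dec_induct)
    case base then show ?case by simp
  next
    case (step m)
    have "dvs N (?t (Suc m) - ?t m)" using dvs_mono[OF _ inc[of m]] step(1) by simp
    then have "dvs N ((?t (Suc m) - ?t m) + (?t m - ?t N))" using dvs_add step(3) by blast
    then show ?case by simp
  qed
  have "val_cauchy v ?t" by (rule cauchy_from_dvs) (rule cs)
  then obtain L where L: "val_converges_to v ?t L" using comp unfolding val_complete_def by blast
  have E0: "2 * L + L^2 - z = 0"
  proof (rule dvs_all_zero)
    fix m
    obtain N where N: "\<forall>n\<ge>N. dvs m (?t n - L)" using conv_dvs[OF L] by blast
    have a: "dvs m (L - ?t (Suc N))" using dvs_neg[OF N[rule_format, of "Suc N"]] by (simp del: sq_seq.simps)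
    have b: "dvs m (L - ?t N)" using dvs_neg[OF N[rule_format, of N]] by (simp del: sq_seq.simps)
    have iL: "intg L" using intg_add[OF dvs_intg[OF b] dvs_intg[OF tb[of N]]] by simp
    have "intg (L + ?t N)" using intg_add[OF iL dvs_intg[OF tb[of N]]] .
    then have c: "dvs m ((L - ?t N) * (L + ?t N))" using dvs_mult_intg b by blast
    have d2: "dvs m (2 * (L - ?t (Suc N)))" using dvs_mult_intg'[OF a, of 2] intg_of_int[of 2] by simp
    have e: "2 * L + L^2 - z = 2 * (L - ?t (Suc N)) + (L - ?t N) * (L + ?t N)"
      using two by (simp add: field_simps power2_eq_square)
    show "dvs m (2 * L + L^2 - z)" unfolding e by (rule dvs_add[OF d2 c])
  qed
  obtain N where N: "\<forall>n\<ge>N. dvs (k-2) (?t n - L)" using conv_dvs[OF L] by blast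
  have "dvs (k-2) (?t N - (?t N - L))" using dvs_diff[OF tb[of N] N[rule_format, of N]] by simp
  then have "dvs (k-2) L" by simp
  moreover have "(1 + L)^2 = 1 + z" using E0 by (simp add: power2_eq_square algebra_simps)
  ultimately show ?thesis by (intro exI[of _ "1 + L"]) simp
qed

lemma fourth_root:
  assumes z: "dvs 7 z"
  shows "\<exists>w. w^4 = 1 + z \<and> w \<noteq> 0"
proof -
  obtain w1 where w1: "w1^2 = 1 + z" "dvs 5 (w1 - 1)" using sqrt_lemma[of 7 z] z by auto
  obtain w2 where w2: "w2^2 = 1 + (w1 - 1)" using sqrt_lemma[of 5 "w1 - 1"] w1(2) by auto
  have "w2^4 = (w2^2)^2" by (simp flip: power_mult)
  also have "\<dots> = 1 + z" using w1(1) w2 by simp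
  finally have e: "w2^4 = 1 + z" .
  have "1 + z \<noteq> 0" using unit_ne[of "1 + z"] dvs_mono[of 1 7 z] z by simp
  then have "w2 \<noteq> 0" using e by auto
  then show ?thesis using e by blast
qed

definition unt :: "'a \<Rightarrow> bool" where "unt x \<longleftrightarrow> intg x \<and> \<not> dvs 1 x"

lemma unt_iff: "unt x \<longleftrightarrow> x \<noteq> 0 \<and> v x = 0"
proof (cases "x = 0")
  case True then show ?thesis unfolding unt_def by simp
next
  case False
  then show ?thesis unfolding unt_def intg_def using dvs_iff_v[OF False, of 1] by auto
qed
lemma unt_mult: "unt x \<Longrightarrow> unt y \<Longrightarrow> unt (x * y)"
  unfolding unt_iff using vmult by auto
lemma unt_inv: "unt x \<Longrightarrow> unt (inverse x)"
  unfolding unt_iff using vinv by auto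
lemma unt_pow: "unt x \<Longrightarrow> unt (x ^ n)"
  unfolding unt_iff using vpow by simp
lemma unt_intg: "unt x \<Longrightarrow> intg x" unfolding unt_def by simp
lemma unt_ne: "unt x \<Longrightarrow> x \<noteq> 0" unfolding unt_iff by simp
lemma unt_res: "unt x \<Longrightarrow> dvs 1 (x - 1)" unfolding unt_def using unit_res by blast
lemma res_unt: "dvs 1 (x - 1) \<Longrightarrow> unt x"
proof -
  assume a: "dvs 1 (x - 1)"
  have "intg x" using intg_add[OF dvs_intg[OF a] intg_1] by simp
  then show "unt x" unfolding unt_def using dvs_1_not_unit a by blast
qed
lemma dvs_of_int_even: "even n \<Longrightarrow> dvs 1 (of_int n::'a)"
proof -
  assume "even n"
  then obtain k where "n = 2 * k" by blast
  then have "(of_int n::'a) = 2 * of_int k" by simp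
  then show ?thesis using dvs_mono[OF _ dvs_mult_intg[OF dvs_two intg_of_int[of k]]] by simp
qed
lemma unt_odd: "odd n \<Longrightarrow> unt (of_int n::'a)"
proof -
  assume "odd n"
  then have "dvs 1 (of_int (n - 1)::'a)" using dvs_of_int_even[of "n - 1"] by simp
  then show ?thesis using res_unt by simp
qed

lemma spow_split: "s^n = of_int (d^(n div 2)) * s^(n mod 2)"
proof -
  have "s^n = s^(2 * (n div 2) + n mod 2)" by simp
  also have "\<dots> = (s^2)^(n div 2) * s^(n mod 2)" by (simp only: power_add power_mult)
  finally show ?thesis using sd by simp
qed

lemma coords: "intg x \<Longrightarrow> \<exists>A B. dvs n (x - (of_int A + of_int B * s))"
proof (induction n)
  case 0 then show ?case by (intro exI[of _ 0]) (simp add: dvs0_iff)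
next
  case (Suc n)
  then obtain A B where ab: "dvs n (x - (of_int A + of_int B * s))" by blast
  then obtain y where y: "intg y" "x - (of_int A + of_int B * s) = s^n * y" unfolding dvs_def by blast
  consider (a) "dvs 1 y" | (b) "dvs 1 (y - 1)" using residue[OF y(1)] by blast
  then show ?case
  proof cases
    case a
    have "dvs (n + 1) (s^n * y)" using dvs_mult[OF dvs_pow a] .
    then show ?thesis using y(2) by (intro exI[of _ A] exI[of _ B]) simp
  next
    case b
    have "dvs (n + 1) (s^n * (y - 1))" using dvs_mult[OF dvs_pow b] .
    then have h: "dvs (Suc n) (x - (of_int A + of_int B * s) - s^n)" using y(2) by (simp add: algebra_simps)
    show ?thesis
    proof (cases "even n")
      case True
      then have "s^n = of_int (d^(n div 2))" using spow_split[of n] by simp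
      then show ?thesis using h by (intro exI[of _ "A + d^(n div 2)"] exI[of _ B]) (simp add: algebra_simps)
    next
      case False
      then have "s^n = of_int (d^(n div 2)) * s" using spow_split[of n] by (simp add: odd_iff_mod_2_eq_one)
      then show ?thesis using h by (intro exI[of _ A] exI[of _ "B + d^(n div 2)"]) (simp add: algebra_simps)
    qed
  qed
qed

lemma coords_unit_odd:
  assumes "unt x" "dvs 1 (x - (of_int A + of_int B * s))"
  shows "odd A"
proof
  assume "even A"
  then have a: "dvs 1 (of_int A::'a)" using dvs_of_int_even by simp
  have b: "dvs 1 (of_int B * s)" using dvs_mult_intg'[OF dvs_pow[of 1] intg_of_int[of B]] by simp
  have "dvs 1 ((x - (of_int A + of_int B * s)) + of_int A + of_int B * s)"
    using dvs_add[OF dvs_add[OF assms(2) a] b] .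
  then have "dvs 1 x" by simp
  then show False using assms(1) unfolding unt_def by simp
qed

lemma digit_fix:
  assumes "dvs k P" "q = s^k * w" "intg w" "dvs 1 (w - 1)"
  shows "dvs (k+1) P \<or> dvs (k+1) (P + q)"
proof -
  obtain y where y: "intg y" "P = s^k * y" using assms(1) unfolding dvs_def by blast
  consider (a) "dvs 1 y" | (b) "dvs 1 (y - 1)" using residue[OF y(1)] by blast
  then show ?thesis
  proof cases
    case a then show ?thesis using dvs_mult[OF dvs_pow[of k] a] y by simp
  next
    case b
    have "dvs 1 ((y - 1) + (w - 1) + 2)"
      using dvs_add[OF dvs_add[OF b assms(4)] dvs_mono[OF _ dvs_two, of 1]] by simp
    then have "dvs 1 (y + w)" by (simp add: algebra_simps)
    then have "dvs (k+1) (s^k * (y + w))" using dvs_mult[OF dvs_pow[of k]] by blast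
    then show ?thesis using y assms(2) by (simp add: algebra_simps)
  qed
qed

lemma r_expand: "(1 + s)^4 - 1 = 4 * of_int (1 + d) * s + of_int (d * (6 + d))"
proof -
  have s2: "s^2 = of_int d" by (rule sd)
  have "(1 + s)^4 - 1 = 4 * s + 6 * s^2 + 4 * (s^2 * s) + (s^2)^2"
    by (simp add: power2_eq_square power4_eq_xxxx algebra_simps)
  also have "\<dots> = 4 * of_int (1 + d) * s + of_int (d * (6 + d))"
    unfolding s2 by (simp add: algebra_simps power2_eq_square)
  finally show ?thesis .
qed

lemma dvs6_8: "8 dvd n \<Longrightarrow> dvs 6 (of_int n::'a)"
proof -
  assume "8 dvd n"
  then obtain k where "n = 8 * k" by blast
  then have "(of_int n::'a) = 2 * 2 * 2 * of_int k" by simp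
  moreover have "dvs 6 ((2::'a) * 2 * 2)" using dvs_mult[OF dvs_mult[OF dvs_two dvs_two] dvs_two] by simp
  ultimately show ?thesis using dvs_mult_intg intg_of_int by metis
qed

lemma r_lemma: "\<exists>w. (1 + s)^4 - 1 = s^5 * w \<and> intg w \<and> dvs 1 (w - 1)"
proof -
  have "8 dvd d * (6 + d)" using d_cases by auto
  then obtain y where y: "intg y" "of_int (d * (6 + d)) = s^6 * y" using dvs6_8 unfolding dvs_def by blast
  define u1 where "u1 = of_int (1 + d) / (of_int (hd^2)::'a)"
  have o1: "odd (1 + d)" using d_cases by auto
  have o2: "odd (hd^2)" using hd_odd by simp
  have uu: "unt u1" unfolding u1_def divide_inverse using unt_mult[OF unt_odd[OF o1] unt_inv[OF unt_odd[OF o2]]] .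
  have hne: "(of_int hd::'a) \<noteq> 0" using hd_unit by simp
  have s4: "s^4 = 4 * (of_int hd)^2"
  proof -
    have "s^4 = (s^2)^2" by (simp flip: power_mult)
    then show ?thesis using sd of_d by (simp add: power2_eq_square)
  qed
  have "4 * of_int (1 + d) * s = s^5 * u1"
  proof -
    have "s^5 = s^4 * s" by (simp add: power_Suc2[symmetric] del: power_Suc)
    then show ?thesis unfolding u1_def using s4 hne by (simp add: field_simps)
  qed
  moreover have s6: "s^6 = s^5 * s" by (simp add: power_Suc2[symmetric] del: power_Suc)
  ultimately have "(1 + s)^4 - 1 = s^5 * (u1 + s * y)" using r_expand y(2) by (simp add: algebra_simps)
  moreover have "intg (u1 + s * y)" using intg_add[OF unt_intg[OF uu] intg_mult[OF intg_s y(1)]] .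
  moreover have "dvs 1 ((u1 + s * y) - 1)"
  proof -
    have "dvs 1 ((u1 - 1) + s * y)" using dvs_add[OF unt_res[OF uu] dvs_mult_intg[OF dvs_pow[of 1] y(1)]] by simp
    then show ?thesis by (simp add: algebra_simps)
  qed
  ultimately show ?thesis by blast
qed

lemma dvs_div_unt: "dvs k x \<Longrightarrow> unt u \<Longrightarrow> dvs k (x / u)"
  unfolding divide_inverse using dvs_mult_intg unt_intg unt_inv by blast

end

lemma sum_upd: "i < (n::nat) \<Longrightarrow> (\<Sum>j<n. c j * (X(i:=z)) j ^ 4) = (\<Sum>j<n. c j * X j ^ 4) - c i * X i ^ 4 + c i * (z::'a::field) ^ 4"
proof -
  assume i: "i < n"
  have f: "finite {..<n}" "i \<in> {..<n}" using i by auto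
  have r1: "(\<Sum>j<n. c j * (X(i:=z)) j ^ 4) = c i * (X(i:=z)) i ^ 4 + (\<Sum>j\<in>{..<n}-{i}. c j * (X(i:=z)) j ^ 4)"
    by (rule sum.remove[OF f])
  have r2: "(\<Sum>j<n. c j * X j ^ 4) = c i * X i ^ 4 + (\<Sum>j\<in>{..<n}-{i}. c j * X j ^ 4)"
    by (rule sum.remove[OF f])
  have r3: "(\<Sum>j\<in>{..<n}-{i}. c j * (X(i:=z)) j ^ 4) = (\<Sum>j\<in>{..<n}-{i}. c j * X j ^ 4)"
    by (rule sum.cong) auto
  show ?thesis using r1 r2 r3 by simp
qed

lemma sum7: "(\<Sum>i<(7::nat). f i) = f 0 + f 1 + f 2 + f 3 + f 4 + f 5 + (f 6 :: 'a::comm_monoid_add)"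
  by (simp add: eval_nat_numeral add.commute add.left_commute)

lemma pow4_01: "t \<in> {0::int,1} \<Longrightarrow> (of_int t :: 'a::field)^4 = of_int t" by auto

context qf begin

lemma ncore:
  fixes c :: "nat \<Rightarrow> 'a"
  assumes u: "\<forall>i<5. unt (c i)" and b5: "c 5 = s^2 * w5" "unt w5" and b6: "c 6 = s^2 * w6" "unt w6"
  shows "\<exists>X. (\<exists>i<7. X i \<noteq> 0) \<and> (\<Sum>i<7. c i * X i ^ 4) = 0"
proof -
  define S where "S = (\<lambda>X. \<Sum>i<7. c i * X i ^ 4)"
  have Supd: "S (X(i:=z)) = S X - c i * X i ^ 4 + c i * z ^ 4" if "i < 7" for X i z
    unfolding S_def using sum_upd[OF that] .
  have "\<forall>i. \<exists>p::int\<times>int. i < 5 \<longrightarrow> dvs 4 (c i - (of_int (fst p) + of_int (snd p) * s))"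
    using coords unt_intg u by fastforce
  then obtain p where p: "\<And>i. i < 5 \<Longrightarrow> dvs 4 (c i - (of_int (fst (p i)) + of_int (snd (p i)) * s))"
    by metis
  define A where "A i = fst (p i)" for i
  define B where "B i = snd (p i)" for i
  have AB: "dvs 4 (c i - (of_int (A i) + of_int (B i) * s))" if "i < 5" for i
    using p[OF that] unfolding A_def B_def .
  have oA: "odd (A i)" if "i < 5" for i
    using coords_unit_odd[of "c i" "A i" "B i"] u that dvs_mono[OF _ AB[OF that], of 1] by simp
  obtain A5 B5 where AB5: "dvs 2 (w5 - (of_int A5 + of_int B5 * s))" using coords[OF unt_intg[OF b5(2)]] by blast
  have oA5: "odd A5" using coords_unit_odd[OF b5(2)] dvs_mono[OF _ AB5, of 1] by simp
  define C where "C = d * A5"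
  define D where "D = d * B5"
  have C4: "C mod 4 = 2"
  proof -
    have "odd (hd * A5)" using hd_odd oA5 by simp
    moreover have "odd m \<Longrightarrow> (2 * m) mod 4 = 2" for m :: int by presburger
    ultimately have "(2 * (hd * A5)) mod 4 = 2" by blast
    moreover have "d * A5 = 2 * (hd * A5)" using d_hd by (metis mult.assoc)
    ultimately show ?thesis unfolding C_def by (simp only:)
  qed
  have De: "even D" unfolding D_def using d_cases by auto
  have CD: "dvs 4 (c 5 - (of_int C + of_int D * s))"
  proof -
    have "c 5 - (of_int C + of_int D * s) = s^2 * (w5 - (of_int A5 + of_int B5 * s))"
      unfolding C_def D_def b5(1) using sd by (simp add: algebra_simps)
    then show ?thesis using dvs_mult[OF dvs_pow[of 2] AB5] by simp
  qed
  have oAs: "odd (A 0)" "odd (A 1)" "odd (A 2)" "odd (A 3)" "odd (A 4)" using oA by auto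
  from int_prefix[OF oAs C4 De, of "B 0" "B 1" "B 2" "B 3" "B 4"]
  obtain t0 t1 t2 t3 t4 \<tau> where tt: "t0 \<in> {0,1}" "t1 \<in> {0,1}" "t2 \<in> {0,1}" "t3 \<in> {0,1}" "t4 \<in> {0::int,1}" "\<tau> \<in> {0::int,1}"
    and tsum: "t0+t1+t2+t3+t4 = 2 \<or> t0+t1+t2+t3+t4 = 4"
    and dA: "4 dvd (t0*A 0+t1*A 1+t2*A 2+t3*A 3+t4*A 4+\<tau>*C)"
    and dB: "4 dvd (t0*B 0+t1*B 1+t2*B 2+t3*B 3+t4*B 4+\<tau>*D)"
    by blast
  define t where "t i = (if i = 0 then t0 else if i = 1 then t1 else if i = 2 then t2 else if i = 3 then t3 else t4)" for i :: nat
  have t01: "t i \<in> {0,1}" for i unfolding t_def using tt by auto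
  define X0 where "X0 i = (if i < 5 then of_int (t i) else if i = 5 then of_int \<tau> else (0::'a))" for i
  have SX0: "S X0 = of_int t0 * c 0 + of_int t1 * c 1 + of_int t2 * c 2 + of_int t3 * c 3 + of_int t4 * c 4 + of_int \<tau> * c 5"
  proof -
    have x: "X0 0 = of_int t0" "X0 1 = of_int t1" "X0 2 = of_int t2" "X0 3 = of_int t3" "X0 4 = of_int t4"
       "X0 5 = of_int \<tau>" "X0 6 = 0" unfolding X0_def t_def by auto
    show ?thesis unfolding S_def sum7 x
      pow4_01[OF tt(1)] pow4_01[OF tt(2)] pow4_01[OF tt(3)] pow4_01[OF tt(4)] pow4_01[OF tt(5)] pow4_01[OF tt(6)]
      by (simp add: algebra_simps)
  qed
  have P4: "dvs 4 (S X0)"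
  proof -
    let ?e = "\<lambda>i. c i - (of_int (A i) + of_int (B i) * s)"
    have eq: "S X0 = of_int t0 * ?e 0 + of_int t1 * ?e 1 + of_int t2 * ?e 2 + of_int t3 * ?e 3 + of_int t4 * ?e 4
       + of_int \<tau> * (c 5 - (of_int C + of_int D * s))
       + (of_int (t0*A 0+t1*A 1+t2*A 2+t3*A 3+t4*A 4+\<tau>*C) + of_int (t0*B 0+t1*B 1+t2*B 2+t3*B 3+t4*B 4+\<tau>*D) * s)"
      unfolding SX0 by (simp add: algebra_simps)
    have "dvs 4 (of_int t0 * ?e 0)" "dvs 4 (of_int t1 * ?e 1)" "dvs 4 (of_int t2 * ?e 2)" "dvs 4 (of_int t3 * ?e 3)" "dvs 4 (of_int t4 * ?e 4)"
      "dvs 4 (of_int \<tau> * (c 5 - (of_int C + of_int D * s)))"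
      using dvs_mult_intg'[OF AB intg_of_int] dvs_mult_intg'[OF CD intg_of_int] by auto
    moreover have "dvs 4 (of_int (t0*A 0+t1*A 1+t2*A 2+t3*A 3+t4*A 4+\<tau>*C) :: 'a)" using dvs_of_int4[OF dA] .
    moreover have "dvs 4 (of_int (t0*B 0+t1*B 1+t2*B 2+t3*B 3+t4*B 4+\<tau>*D) * s)"
      using dvs_mult_intg[OF dvs_of_int4[OF dB] intg_s] .
    ultimately show ?thesis unfolding eq by (intro dvs_add) auto
  qed
  have "t0 = 0 \<or> t1 = 0 \<or> t2 = 0 \<or> t3 = 0 \<or> t4 = 0" using tt tsum by auto
  then have ex0: "\<exists>k<5. t k = 0" unfolding t_def
    apply (elim disjE)
    apply (rule exI[of _ 0], simp) apply (rule exI[of _ 1], simp) apply (rule exI[of _ 2], simp)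
    apply (rule exI[of _ 3], simp) apply (rule exI[of _ 4], simp) done
  then obtain k where k: "k < 5" "t k = 0" by blast
  have "t0 = 1 \<or> t1 = 1 \<or> t2 = 1 \<or> t3 = 1 \<or> t4 = 1" using tt tsum by auto
  then have ex1: "\<exists>i<5. t i = 1" unfolding t_def
    apply (elim disjE)
    apply (rule exI[of _ 0], simp) apply (rule exI[of _ 1], simp) apply (rule exI[of _ 2], simp)
    apply (rule exI[of _ 3], simp) apply (rule exI[of _ 4], simp) done
  then obtain i0 where i0: "i0 < 5" "t i0 = 1" by blast
  have ki: "k \<noteq> i0" using k i0 by auto
  have X0k: "X0 k = 0" using k unfolding X0_def by simp
  have X0i: "X0 i0 = 1" using i0 unfolding X0_def by simp
  have X06: "X0 6 = 0" unfolding X0_def by simp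
  define X1 where "X1 = (if dvs 5 (S X0) then X0 else X0(k := s))"
  have P5: "dvs 5 (S X1)"
  proof (cases "dvs 5 (S X0)")
    case True then show ?thesis unfolding X1_def by simp
  next
    case False
    have "S X1 = S X0 + s^4 * c k" unfolding X1_def using False Supd[of k X0 s] k X0k by (simp add: algebra_simps)
    moreover have "dvs (4+1) (S X0) \<or> dvs (4+1) (S X0 + s^4 * c k)"
      by (rule digit_fix[OF P4 refl]) (use u k unt_intg unt_res in auto)
    ultimately show ?thesis using False by simp
  qed
  have X1i: "X1 i0 = 1" unfolding X1_def using X0i ki by simp
  have X16: "X1 6 = 0" unfolding X1_def using X06 k by simp
  obtain w where w: "(1 + s)^4 - 1 = s^5 * w" "intg w" "dvs 1 (w - 1)" using r_lemma by blast
  define X2 where "X2 = (if dvs 6 (S X1) then X1 else X1(i0 := 1 + s))"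
  have P6: "dvs 6 (S X2)"
  proof (cases "dvs 6 (S X1)")
    case True then show ?thesis unfolding X2_def by simp
  next
    case False
    have "S X2 = S X1 + c i0 * ((1 + s)^4 - 1)" unfolding X2_def using False Supd[of i0 X1 "1 + s"] i0 X1i
      by (simp add: algebra_simps)
    also have "\<dots> = S X1 + s^5 * (c i0 * w)" using w(1) by simp
    finally have e: "S X2 = S X1 + s^5 * (c i0 * w)" .
    have ui: "unt (c i0)" using u i0 by simp
    have "intg (c i0 * w)" using intg_mult[OF unt_intg[OF ui] w(2)] .
    moreover have "dvs 1 (c i0 * w - 1)"
    proof -
      have "dvs 1 (c i0 * (w - 1) + (c i0 - 1))"
        using dvs_add[OF dvs_mult_intg'[OF w(3) unt_intg[OF ui]] unt_res[OF ui]] .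
      then show ?thesis by (simp add: algebra_simps)
    qed
    ultimately have "dvs (5+1) (S X1) \<or> dvs (5+1) (S X1 + s^5 * (c i0 * w))"
      using digit_fix[OF P5 refl] by blast
    then show ?thesis using False e by simp
  qed
  have X2i: "X2 i0 = 1 \<or> X2 i0 = 1 + s" unfolding X2_def using X1i by simp
  have X26: "X2 6 = 0" unfolding X2_def using X16 i0 by simp
  define X3 where "X3 = (if dvs 7 (S X2) then X2 else X2(6 := s))"
  have P7: "dvs 7 (S X3)"
  proof (cases "dvs 7 (S X2)")
    case True then show ?thesis unfolding X3_def by simp
  next
    case False
    have "S X3 = S X2 + c 6 * s^4" unfolding X3_def using False Supd[of 6 X2 s] X26 by simp
    also have "\<dots> = S X2 + s^6 * w6" using b6(1) by (simp add: algebra_simps flip: power_add)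
    finally have e: "S X3 = S X2 + s^6 * w6" .
    have "dvs (6+1) (S X2) \<or> dvs (6+1) (S X2 + s^6 * w6)"
      by (rule digit_fix[OF P6 refl]) (use b6 unt_intg unt_res in auto)
    then show ?thesis using False e by simp
  qed
  have X3i: "X3 i0 = X2 i0" unfolding X3_def using i0 by simp
  define xi where "xi = X3 i0"
  have uxi: "unt xi"
  proof -
    have "dvs 1 (xi - 1)" unfolding xi_def X3i using X2i dvs_pow[of 1] by auto
    then show ?thesis using res_unt by blast
  qed
  define U where "U = c i0 * xi^4"
  have uU: "unt U" unfolding U_def using unt_mult[OF _ unt_pow[OF uxi]] u i0 by simp
  define z where "z = - S X3 / U"
  have dz: "dvs 7 z" unfolding z_def using dvs_div_unt[OF dvs_neg[OF P7] uU] by simp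
  obtain r where r: "r^4 = 1 + z" "r \<noteq> 0" using fourth_root[OF dz] by blast
  define X4 where "X4 = X3(i0 := xi * r)"
  have "S X4 = S X3 - U + U * r^4" unfolding X4_def U_def xi_def using Supd[of i0 X3 "X3 i0 * r"] i0
    by (simp add: power_mult_distrib algebra_simps)
  also have "\<dots> = 0" unfolding r(1) z_def using unt_ne[OF uU] by (simp add: field_simps)
  finally have "S X4 = 0" .
  moreover have "X4 i0 \<noteq> 0" unfolding X4_def using unt_ne[OF uxi] r(2) by simp
  moreover have "i0 < 7" using i0 by simp
  ultimately show ?thesis unfolding S_def by blast
qed
end

context qf begin

definition spw :: "int \<Rightarrow> 'a" where
  "spw m = (if m \<ge> 0 then s^(nat m) else inverse (s^(nat (-m))))"

lemma spw_ne: "spw m \<noteq> 0" unfolding spw_def using s_ne by auto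
lemma v_spw: "v (spw m) = m"
  unfolding spw_def using vpow[OF s_ne] vinv s_ne vs by auto

lemma reduce:
  fixes c :: "nat \<Rightarrow> 'a" and L :: int
  assumes nz: "\<forall>i<7. c i \<noteq> 0"
    and l0: "\<forall>i<5. v (c i) mod 4 = L mod 4"
    and l2: "v (c 5) mod 4 = (2 + L) mod 4" "v (c 6) mod 4 = (2 + L) mod 4"
  shows "\<exists>X. (\<exists>i<7. X i \<noteq> 0) \<and> (\<Sum>i<7. c i * X i ^ 4) = 0"
proof -
  define \<rho> where "\<rho> = v (c 0)"
  define q where "q i = (if i < 5 then (v (c i) - \<rho>) div 4 else (v (c i) - \<rho> - 2) div 4)" for i
  have q0: "v (c i) = \<rho> + 4 * q i" if "i < 5" for i
  proof -
    have a: "v (c i) mod 4 = L mod 4" "\<rho> mod 4 = L mod 4" using l0 that unfolding \<rho>_def by auto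
    have "x mod 4 = L mod 4 \<Longrightarrow> y mod 4 = L mod 4 \<Longrightarrow> (x - y) mod 4 = 0" for x y :: int by presburger
    then have "(v (c i) - \<rho>) mod 4 = 0" using a by blast
    then show ?thesis unfolding q_def using that by auto
  qed
  have q2: "v (c i) = \<rho> + 2 + 4 * q i" if "i = 5 \<or> i = 6" for i
  proof -
    have a: "v (c i) mod 4 = (2 + L) mod 4" using that l2 by auto
    have b: "\<rho> mod 4 = L mod 4" using l0 unfolding \<rho>_def by simp
    have "x mod 4 = (2 + L) mod 4 \<Longrightarrow> y mod 4 = L mod 4 \<Longrightarrow> (x - y - 2) mod 4 = 0" for x y :: int by presburger
    then have "(v (c i) - \<rho> - 2) mod 4 = 0" using a b by blast
    then show ?thesis unfolding q_def using that by auto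
  qed
  define p where "p i = spw (q i)" for i
  define c' where "c' i = c i / (spw \<rho> * p i ^ 4)" for i
  have pne: "p i \<noteq> 0" for i unfolding p_def using spw_ne by simp
  have vc': "v (c' i) = v (c i) - \<rho> - 4 * q i" if "i < 7" for i
  proof -
    have "v (spw \<rho> * p i ^ 4) = \<rho> + 4 * q i" using vmult[OF spw_ne] vpow[OF pne] v_spw pne spw_ne
      unfolding p_def by simp
    then show ?thesis unfolding c'_def using vdiv[of "c i" "spw \<rho> * p i ^ 4"] nz that spw_ne pne by simp
  qed
  have c'ne: "c' i \<noteq> 0" if "i < 7" for i unfolding c'_def using nz that spw_ne pne by simp
  have u: "\<forall>i<5. unt (c' i)" using vc' q0 c'ne unfolding unt_iff by auto
  have w5: "c' 5 = s^2 * (c' 5 / s^2)" "unt (c' 5 / s^2)"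
    using c'ne[of 5] vc'[of 5] q2[of 5] s_ne vdiv[of "c' 5" "s^2"] vpow[OF s_ne, of 2] vs unfolding unt_iff by auto
  have w6: "c' 6 = s^2 * (c' 6 / s^2)" "unt (c' 6 / s^2)"
    using c'ne[of 6] vc'[of 6] q2[of 6] s_ne vdiv[of "c' 6" "s^2"] vpow[OF s_ne, of 2] vs unfolding unt_iff by auto
  obtain Y where Y: "\<exists>i<7. Y i \<noteq> 0" "(\<Sum>i<7. c' i * Y i ^ 4) = 0"
    using ncore[OF u w5 w6] by blast
  define X where "X i = Y i / p i" for i
  have "(\<Sum>i<7. c i * X i ^ 4) = (\<Sum>i<7. spw \<rho> * (c' i * Y i ^ 4))"
    by (rule sum.cong) (use pne spw_ne in \<open>auto simp: X_def c'_def field_simps\<close>)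
  also have "\<dots> = spw \<rho> * (\<Sum>i<7. c' i * Y i ^ 4)" by (simp add: sum_distrib_left)
  also have "\<dots> = 0" using Y(2) by simp
  finally have "(\<Sum>i<7. c i * X i ^ 4) = 0" .
  moreover have "\<exists>i<7. X i \<noteq> 0" using Y(1) pne unfolding X_def by auto
  ultimately show ?thesis by blast
qed

end

lemma embed_sum:
  fixes a X :: "nat \<Rightarrow> 'a::field" and f :: "nat \<Rightarrow> nat"
  assumes inj: "inj_on f {..<m}" and sub: "f ` {..<m} \<subseteq> {..<n}"
  defines "x \<equiv> (\<lambda>k. if k \<in> f ` {..<m} then X (the_inv_into {..<m} f k) else 0)"
  shows "(\<Sum>k<n. a k * x k ^ 4) = (\<Sum>i<m. a (f i) * X i ^ 4)" and "\<And>i. i < m \<Longrightarrow> x (f i) = X i"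
proof -
  show xf: "x (f i) = X i" if "i < m" for i
    unfolding x_def using that the_inv_into_f_f[OF inj] by auto
  have "(\<Sum>k<n. a k * x k ^ 4) = (\<Sum>k\<in>f ` {..<m}. a k * x k ^ 4)"
    by (rule sum.mono_neutral_right) (use sub in \<open>auto simp: x_def\<close>)
  also have "\<dots> = (\<Sum>i<m. a (f i) * x (f i) ^ 4)" by (rule sum.reindex[OF inj, unfolded comp_def])
  also have "\<dots> = (\<Sum>i<m. a (f i) * X i ^ 4)" by (rule sum.cong) (auto simp: xf)
  finally show "(\<Sum>k<n. a k * x k ^ 4) = (\<Sum>i<m. a (f i) * X i ^ 4)" .
qed

theorem mainTheorem11:
  fixes v :: "'a::field \<Rightarrow> int" and a :: "nat \<Rightarrow> 'a"
  assumes "is_Q2_sqrt_field v"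
    and "\<forall>k<11. a k \<noteq> 0"
    and "form_of_type v 11 a ((\<lambda>_. 0)(0 := 5, 2 := 3))"
  shows "\<exists>x :: nat \<Rightarrow> 'a. (\<exists>k<11. x k \<noteq> 0) \<and> (\<Sum>k<11. a k * x k ^ 4) = 0"
proof -
  obtain d s where ds: "d \<in> {2, 10, -2, -10}" "s^2 = (of_int d :: 'a)"
    using assms(1) unfolding is_Q2_sqrt_field_def by blast
  interpret qf v s d
    using assms(1) ds unfolding is_Q2_sqrt_field_def by unfold_locales auto
  obtain j :: int where j: "\<forall>i<4. card {k. k < 11 \<and> level v (a k) = (int i + j) mod 4} \<ge> ((\<lambda>_. 0)(0 := 5, 2 := 3)) i"
    using assms(3) unfolding form_of_type_def by blast
  define M0 where "M0 = {k. k < 11 \<and> level v (a k) = (int 0 + j) mod 4}"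
  define M2 where "M2 = {k. k < 11 \<and> level v (a k) = (int 2 + j) mod 4}"
  have cM0: "card M0 \<ge> 5" using j[rule_format, of 0] unfolding M0_def by simp
  have cM2: "card M2 \<ge> 2" using j[rule_format, of 2] unfolding M2_def by simp
  obtain S0 where S0: "S0 \<subseteq> M0" "card S0 = 5" "finite S0" using obtain_subset_with_card_n[OF cM0] by blast
  obtain S2 where S2: "S2 \<subseteq> M2" "card S2 = 2" "finite S2" using obtain_subset_with_card_n[OF cM2] by blast
  obtain h0 :: "nat \<Rightarrow> nat" where h0: "bij_betw h0 {0..<5} S0" using ex_bij_betw_nat_finite[OF S0(3)] S0(2) by auto
  obtain h2 :: "nat \<Rightarrow> nat" where h2: "bij_betw h2 {0..<2} S2" using ex_bij_betw_nat_finite[OF S2(3)] S2(2) by auto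
  define f where "f i = (if i < 5 then h0 i else h2 (i - 5))" for i
  have fM0: "f i \<in> M0" if "i < 5" for i
    using that h0 S0(1) unfolding f_def bij_betw_def by auto
  have fM2: "f i \<in> M2" if "5 \<le> i" "i < 7" for i
  proof -
    have "i - 5 \<in> {0..<2}" using that by auto
    then show ?thesis using that h2 S2(1) unfolding f_def bij_betw_def by auto
  qed
  have disj: "M0 \<inter> M2 = {}"
  proof -
    have "(int 0 + j) mod 4 \<noteq> (int 2 + j) mod 4" by presburger
    then show ?thesis unfolding M0_def M2_def by auto
  qed
  have inj: "inj_on f {..<7}"
  proof (rule inj_onI)
    fix x y assume xy: "x \<in> {..<7}" "y \<in> {..<7}" "f x = f y"
    show "x = y"
    proof (cases "x < 5"; cases "y < 5")
      assume "x < 5" "y < 5"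
      then show ?thesis using xy h0 unfolding f_def bij_betw_def inj_on_def by auto
    next
      assume a: "x < 5" "\<not> y < 5"
      have "f x \<in> M0" using fM0 a by blast
      moreover have "f y \<in> M2" using fM2[of y] a xy(2) by simp
      ultimately show ?thesis using xy(3) disj by auto
    next
      assume a: "\<not> x < 5" "y < 5"
      have "f y \<in> M0" using fM0 a by blast
      moreover have "f x \<in> M2" using fM2[of x] a xy(1) by simp
      ultimately show ?thesis using xy(3) disj by auto
    next
      assume a: "\<not> x < 5" "\<not> y < 5"
      then have "x - 5 \<in> {0..<2}" "y - 5 \<in> {0..<2}" "h2 (x - 5) = h2 (y - 5)" using xy unfolding f_def by auto
      then have "x - 5 = y - 5" using h2 unfolding bij_betw_def inj_on_def by blast
      then show ?thesis using a by simp
    qed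
  qed
  have sub: "f ` {..<7} \<subseteq> {..<11}"
  proof
    fix k assume "k \<in> f ` {..<7}"
    then obtain i where i: "i < 7" "k = f i" by auto
    show "k \<in> {..<11}"
    proof (cases "i < 5")
      case True then show ?thesis using fM0 i unfolding M0_def by auto
    next
      case False then show ?thesis using fM2[of i] i unfolding M2_def by auto
    qed
  qed
  define c where "c i = a (f i)" for i
  have nz: "\<forall>i<7. c i \<noteq> 0" using sub assms(2) unfolding c_def by auto
  have l0: "\<forall>i<5. v (c i) mod 4 = j mod 4" using fM0 unfolding c_def M0_def level_def by auto
  have l2: "v (c 5) mod 4 = (2 + j) mod 4" "v (c 6) mod 4 = (2 + j) mod 4"
    using fM2[of 5] fM2[of 6] unfolding c_def M2_def level_def by auto
  obtain X where X: "\<exists>i<7. X i \<noteq> 0" "(\<Sum>i<7. c i * X i ^ 4) = 0" using reduce[OF nz l0 l2] by blast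
  define x where "x = (\<lambda>k. if k \<in> f ` {..<7} then X (the_inv_into {..<7} f k) else 0)"
  have e1: "(\<Sum>k<11. a k * x k ^ 4) = (\<Sum>i<7. a (f i) * X i ^ 4)"
    unfolding x_def by (rule embed_sum(1)[OF inj sub])
  have e2: "x (f i) = X i" if "i < 7" for i unfolding x_def by (rule embed_sum(2)[OF inj sub that])
  obtain i where i: "i < 7" "X i \<noteq> 0" using X(1) by blast
  have "f i < 11" using sub i by auto
  moreover have "x (f i) \<noteq> 0" using e2 i by simp
  moreover have "(\<Sum>k<11. a k * x k ^ 4) = 0" using e1 X(2) unfolding c_def by simp
  ultimately show ?thesis by blast
qed

end
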